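(* Let $g$ be a $C^1$ function near $0\in\mathbb{C}$ with $g(0)=0$, $g_z(0)=0$, $g_{\bar z}(0)=1$, such that $z^2$ and $g^2$ separate points near $0$. Let $f$ be an odd holomorphic function of one complex variable near $0$ with $f(z)=O(z^3)$. Then for every closed disk $D$ centered at $0$ with sufficiently small radius, $$[\,z^2,\ (g+f)^2\,;\,D\,]=[\,z^2,\ g^2\,;\,D\,].$$
   Context: For continuous functions $f_1,f_2$ on a compact set $D\subset\mathbb{C}$, $[f_1,f_2;D]$ denotes the uniform closure in $C(D)$ of the set of polynomials (with complex coefficients) in $f_1$ and $f_2$. *)

theory Defs
  imports "HOL-Analysis.Analysis"
begin

definition poly_in2 :: "(complex \<Rightarrow> complex) \<Rightarrow> (complex \<Rightarrow> complex) \<Rightarrow> (complex \<Rightarrow> complex) set" where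
  "poly_in2 f1 f2 = {(\<lambda>z. \<Sum>(i,j)\<in>S. c (i,j) * f1 z ^ i * f2 z ^ j) | S c. finite (S :: (nat \<times> nat) set)}"

definition unif_closure_alg :: "(complex \<Rightarrow> complex) \<Rightarrow> (complex \<Rightarrow> complex) \<Rightarrow> complex set \<Rightarrow> (complex \<Rightarrow> complex) set" where
  "unif_closure_alg f1 f2 D = {h \<in> extensional D. continuous_on D h \<and>
      (\<forall>e>0. \<exists>p\<in>poly_in2 f1 f2. \<forall>z\<in>D. cmod (h z - p z) < e)}"

definition wirt_z :: "(complex \<Rightarrow> complex) \<Rightarrow> complex" where
  "wirt_z Dg = (Dg 1 - \<i> * Dg \<i>) / 2"
definition wirt_zbar :: "(complex \<Rightarrow> complex) \<Rightarrow> complex" where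
  "wirt_zbar Dg = (Dg 1 + \<i> * Dg \<i>) / 2"

end

theory Submission
  imports Defs "HOL-Complex_Analysis.Complex_Analysis"
begin


lemma poly_in2_gen:
  fixes I :: "'a set"
  assumes "finite I"
  shows "(\<lambda>z. \<Sum>x\<in>I. d x * f1 z ^ i x * f2 z ^ j x) \<in> poly_in2 f1 f2"
proof -
  define k where "k x = (i x, j x)" for x
  define S where "S = k ` I"
  define c where "c = (\<lambda>(a,b). \<Sum>x\<in>{x. x \<in> I \<and> k x = (a,b)}. d x)"
  have fS: "finite S" using assms by (simp add: S_def)
  have "(\<lambda>z. \<Sum>(a,b)\<in>S. c (a,b) * f1 z ^ a * f2 z ^ b) = (\<lambda>z. \<Sum>x\<in>I. d x * f1 z ^ i x * f2 z ^ j x)"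
  proof
    fix z
    have "(\<Sum>(a,b)\<in>S. c (a,b) * f1 z ^ a * f2 z ^ b)
        = (\<Sum>y\<in>S. \<Sum>x\<in>{x. x \<in> I \<and> k x = y}. d x * f1 z ^ i x * f2 z ^ j x)"
    proof (rule sum.cong[OF refl])
      fix y assume "y \<in> S"
      obtain a b where y: "y = (a,b)" by (cases y)
      have "(\<Sum>x\<in>{x. x \<in> I \<and> k x = y}. d x * f1 z ^ i x * f2 z ^ j x)
          = (\<Sum>x\<in>{x. x \<in> I \<and> k x = y}. d x * f1 z ^ a * f2 z ^ b)"
        by (rule sum.cong) (auto simp: k_def y)
      also have "\<dots> = c (a,b) * f1 z ^ a * f2 z ^ b"
        by (simp add: c_def y sum_distrib_right)
      finally show "(case y of (a, b) \<Rightarrow> c (a, b) * f1 z ^ a * f2 z ^ b) = (\<Sum>x\<in>{x. x \<in> I \<and> k x = y}. d x * f1 z ^ i x * f2 z ^ j x)"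
        by (simp add: y)
    qed
    also have "\<dots> = (\<Sum>x\<in>I. d x * f1 z ^ i x * f2 z ^ j x)"
      by (rule sum.group) (use assms fS in \<open>auto simp: S_def\<close>)
    finally show "(\<Sum>(a,b)\<in>S. c (a,b) * f1 z ^ a * f2 z ^ b) = (\<Sum>x\<in>I. d x * f1 z ^ i x * f2 z ^ j x)" .
  qed
  then show ?thesis unfolding poly_in2_def
    by (intro CollectI exI[where x=S] exI[where x=c]) (use fS in simp)
qed

lemma poly_in2_E:
  assumes "p \<in> poly_in2 f1 f2"
  obtains S c where "finite (S :: (nat \<times> nat) set)" "p = (\<lambda>z. \<Sum>x\<in>S. c x * f1 z ^ fst x * f2 z ^ snd x)"
proof -
  from assms obtain S c where "finite (S :: (nat \<times> nat) set)" "p = (\<lambda>z. \<Sum>(i,j)\<in>S. c (i,j) * f1 z ^ i * f2 z ^ j)"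
    unfolding poly_in2_def by blast
  moreover have "(\<lambda>z. \<Sum>(i,j)\<in>S. c (i,j) * f1 z ^ i * f2 z ^ j) = (\<lambda>z. \<Sum>x\<in>S. c x * f1 z ^ fst x * f2 z ^ snd x)"
    by (simp add: case_prod_beta)
  ultimately show ?thesis using that by auto
qed

lemma poly_in2_add:
  assumes "p \<in> poly_in2 f1 f2" "q \<in> poly_in2 f1 f2"
  shows "(\<lambda>z. p z + q z) \<in> poly_in2 f1 f2"
proof -
  obtain S c where S: "finite S" "p = (\<lambda>z. \<Sum>x\<in>S. c x * f1 z ^ fst x * f2 z ^ snd x)"
    using poly_in2_E[OF assms(1)] by blast
  obtain T d where T: "finite T" "q = (\<lambda>z. \<Sum>x\<in>T. d x * f1 z ^ fst x * f2 z ^ snd x)"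
    using poly_in2_E[OF assms(2)] by blast
  let ?I = "Inl ` S \<union> Inr ` T"
  let ?d = "\<lambda>x. case x of Inl a \<Rightarrow> c a | Inr b \<Rightarrow> d b"
  let ?i = "\<lambda>x. case x of Inl a \<Rightarrow> fst a | Inr b \<Rightarrow> fst b"
  let ?j = "\<lambda>x. case x of Inl a \<Rightarrow> snd a | Inr b \<Rightarrow> snd b"
  have "(\<lambda>z. \<Sum>x\<in>?I. ?d x * f1 z ^ ?i x * f2 z ^ ?j x) \<in> poly_in2 f1 f2"
    by (rule poly_in2_gen) (use S T in auto)
  moreover have "(\<lambda>z. \<Sum>x\<in>?I. ?d x * f1 z ^ ?i x * f2 z ^ ?j x) = (\<lambda>z. p z + q z)"
  proof
    fix z
    have "(\<Sum>x\<in>?I. ?d x * f1 z ^ ?i x * f2 z ^ ?j x) = (\<Sum>x\<in>Inl ` S. ?d x * f1 z ^ ?i x * f2 z ^ ?j x) + (\<Sum>x\<in>Inr ` T. ?d x * f1 z ^ ?i x * f2 z ^ ?j x)"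
      by (rule sum.union_disjoint) (use S T in auto)
    also have "\<dots> = p z + q z"
      by (simp add: S T sum.reindex)
    finally show "(\<Sum>x\<in>?I. ?d x * f1 z ^ ?i x * f2 z ^ ?j x) = p z + q z" .
  qed
  ultimately show ?thesis by simp
qed

lemma poly_in2_mult:
  assumes "p \<in> poly_in2 f1 f2" "q \<in> poly_in2 f1 f2"
  shows "(\<lambda>z. p z * q z) \<in> poly_in2 f1 f2"
proof -
  obtain S c where S: "finite S" "p = (\<lambda>z. \<Sum>x\<in>S. c x * f1 z ^ fst x * f2 z ^ snd x)"
    using poly_in2_E[OF assms(1)] by blast
  obtain T d where T: "finite T" "q = (\<lambda>z. \<Sum>x\<in>T. d x * f1 z ^ fst x * f2 z ^ snd x)"
    using poly_in2_E[OF assms(2)] by blast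
  have "(\<lambda>z. \<Sum>x\<in>S \<times> T. (c (fst x) * d (snd x)) * f1 z ^ (fst (fst x) + fst (snd x)) * f2 z ^ (snd (fst x) + snd (snd x))) \<in> poly_in2 f1 f2"
    by (rule poly_in2_gen) (use S T in auto)
  moreover have "(\<lambda>z. \<Sum>x\<in>S \<times> T. (c (fst x) * d (snd x)) * f1 z ^ (fst (fst x) + fst (snd x)) * f2 z ^ (snd (fst x) + snd (snd x))) = (\<lambda>z. p z * q z)"
    by (auto simp: S T sum_product sum.cartesian_product power_add mult_ac intro!: ext sum.cong)
  ultimately show ?thesis by simp
qed

lemma poly_in2_const: "(\<lambda>z. a) \<in> poly_in2 f1 f2"
proof -
  have "(\<lambda>z. \<Sum>x\<in>{()}. a * f1 z ^ 0 * f2 z ^ 0) \<in> poly_in2 f1 f2" by (rule poly_in2_gen) auto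
  then show ?thesis by simp
qed

lemma poly_in2_f1: "f1 \<in> poly_in2 f1 f2"
proof -
  have "(\<lambda>z. \<Sum>x\<in>{()}. 1 * f1 z ^ 1 * f2 z ^ 0) \<in> poly_in2 f1 f2" by (rule poly_in2_gen) auto
  then show ?thesis by simp
qed

lemma poly_in2_f2: "f2 \<in> poly_in2 f1 f2"
proof -
  have "(\<lambda>z. \<Sum>x\<in>{()}. 1 * f1 z ^ 0 * f2 z ^ 1) \<in> poly_in2 f1 f2" by (rule poly_in2_gen) auto
  then show ?thesis by simp
qed

lemma poly_in2_cont:
  assumes "p \<in> poly_in2 f1 f2" "continuous_on D f1" "continuous_on D f2"
  shows "continuous_on D p"
proof -
  obtain S c where S: "finite S" "p = (\<lambda>z. \<Sum>x\<in>S. c x * f1 z ^ fst x * f2 z ^ snd x)"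
    using poly_in2_E[OF assms(1)] by blast
  show ?thesis unfolding S(2) by (intro continuous_intros assms)
qed




definition approx :: "(complex \<Rightarrow> complex) \<Rightarrow> (complex \<Rightarrow> complex) \<Rightarrow> complex set \<Rightarrow> (complex \<Rightarrow> complex) set" where
  "approx f1 f2 D = {h. \<forall>e>0. \<exists>p\<in>poly_in2 f1 f2. \<forall>z\<in>D. cmod (h z - p z) < e}"

lemma approxD:
  assumes "h \<in> approx f1 f2 D" "e > 0"
  shows "\<exists>p\<in>poly_in2 f1 f2. \<forall>z\<in>D. cmod (h z - p z) < e"
  using assms unfolding approx_def by blast

lemma approx_poly: "p \<in> poly_in2 f1 f2 \<Longrightarrow> p \<in> approx f1 f2 D"
  unfolding approx_def by (auto intro!: bexI[where x=p])

lemma approx_closed: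
  assumes "\<And>e. e > 0 \<Longrightarrow> \<exists>h'\<in>approx f1 f2 D. \<forall>z\<in>D. cmod (h z - h' z) < e"
  shows "h \<in> approx f1 f2 D"
  unfolding approx_def
proof (intro CollectI allI impI)
  fix e :: real assume e: "e > 0"
  obtain h' where h': "h' \<in> approx f1 f2 D" "\<forall>z\<in>D. cmod (h z - h' z) < e/2"
    using assms[OF half_gt_zero[OF e]] by blast
  obtain p where p: "p \<in> poly_in2 f1 f2" "\<forall>z\<in>D. cmod (h' z - p z) < e/2"
    using approxD[OF h'(1), OF half_gt_zero[OF e]] by blast
  have "\<forall>z\<in>D. cmod (h z - p z) < e"
  proof
    fix z assume z: "z \<in> D"
    have "cmod (h z - p z) \<le> cmod (h z - h' z) + cmod (h' z - p z)"
      using norm_triangle_ineq[of "h z - h' z" "h' z - p z"] by simp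
    then show "cmod (h z - p z) < e" using h'(2) p(2) z by force
  qed
  then show "\<exists>p\<in>poly_in2 f1 f2. \<forall>z\<in>D. cmod (h z - p z) < e" using p(1) by blast
qed

lemma approx_add:
  assumes "a \<in> approx f1 f2 D" "b \<in> approx f1 f2 D"
  shows "(\<lambda>z. a z + b z) \<in> approx f1 f2 D"
  unfolding approx_def
proof (intro CollectI allI impI)
  fix e :: real assume e: "e > 0"
  obtain p where p: "p \<in> poly_in2 f1 f2" "\<forall>z\<in>D. cmod (a z - p z) < e/2"
    using approxD[OF assms(1), OF half_gt_zero[OF e]] by blast
  obtain q where q: "q \<in> poly_in2 f1 f2" "\<forall>z\<in>D. cmod (b z - q z) < e/2"
    using approxD[OF assms(2), OF half_gt_zero[OF e]] by blast
  have "\<forall>z\<in>D. cmod (a z + b z - (p z + q z)) < e"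
  proof
    fix z assume z: "z \<in> D"
    have "cmod (a z + b z - (p z + q z)) \<le> cmod (a z - p z) + cmod (b z - q z)"
      using norm_triangle_ineq[of "a z - p z" "b z - q z"] by (simp add: algebra_simps)
    then show "cmod (a z + b z - (p z + q z)) < e" using p(2) q(2) z by force
  qed
  note est = this
  show "\<exists>p\<in>poly_in2 f1 f2. \<forall>z\<in>D. cmod (a z + b z - p z) < e"
    apply (rule bexI[where x="\<lambda>z. p z + q z"])
    using est poly_in2_add[OF p(1) q(1)] by auto
qed

lemma poly_bounded:
  assumes "p \<in> poly_in2 f1 f2" "continuous_on D f1" "continuous_on D f2" "compact D"
  shows "\<exists>B. \<forall>z\<in>D. cmod (p z) \<le> B"
proof -
  have "compact (p ` D)"
    by (rule compact_continuous_image[OF poly_in2_cont[OF assms(1-3)] assms(4)])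
  then obtain B where "\<forall>x\<in>p ` D. norm x \<le> B"
    using compact_imp_bounded bounded_iff by metis
  then show ?thesis by auto
qed

lemma approx_bounded:
  assumes "h \<in> approx f1 f2 D" "continuous_on D f1" "continuous_on D f2" "compact D"
  shows "\<exists>B. \<forall>z\<in>D. cmod (h z) \<le> B"
proof -
  obtain p where p: "p \<in> poly_in2 f1 f2" "\<forall>z\<in>D. cmod (h z - p z) < 1"
    using approxD[OF assms(1) zero_less_one] by blast
  obtain B where B: "\<forall>z\<in>D. cmod (p z) \<le> B" using poly_bounded[OF p(1) assms(2-4)] by blast
  have "\<forall>z\<in>D. cmod (h z) \<le> B + 1"
  proof
    fix z assume z: "z \<in> D"
    have "cmod (h z) \<le> cmod (h z - p z) + cmod (p z)" using norm_triangle_ineq[of "h z - p z" "p z"] by simp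
    then show "cmod (h z) \<le> B + 1" using p(2) B z by force
  qed
  then show ?thesis by blast
qed

lemma approx_mult:
  assumes "a \<in> approx f1 f2 D" "b \<in> approx f1 f2 D"
    and cont: "continuous_on D f1" "continuous_on D f2" "compact D"
  shows "(\<lambda>z. a z * b z) \<in> approx f1 f2 D"
proof -
  obtain A where A: "\<forall>z\<in>D. cmod (a z) \<le> A" using approx_bounded[OF assms(1) cont] by blast
  obtain B where B: "\<forall>z\<in>D. cmod (b z) \<le> B" using approx_bounded[OF assms(2) cont] by blast
  show ?thesis
  unfolding approx_def
  proof (intro CollectI allI impI)
    fix e :: real assume e: "e > 0"
    define M where "M = \<bar>A\<bar> + \<bar>B\<bar> + 1"
    have M: "M > 0" "\<bar>A\<bar> \<le> M" "\<bar>B\<bar> + 1 \<le> M" by (auto simp: M_def)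
    define e' where "e' = min 1 (e / (4*M))"
    have e': "e' > 0" "e' \<le> 1" "e' * M \<le> e/4" using e M
      by (auto simp: e'_def min_def field_simps)
    obtain p where p: "p \<in> poly_in2 f1 f2" "\<forall>z\<in>D. cmod (a z - p z) < e'"
      using approxD[OF assms(1) e'(1)] by blast
    obtain q where q: "q \<in> poly_in2 f1 f2" "\<forall>z\<in>D. cmod (b z - q z) < e'"
      using approxD[OF assms(2) e'(1)] by blast
    have "\<forall>z\<in>D. cmod (a z * b z - p z * q z) < e"
    proof
      fix z assume z: "z \<in> D"
      have qb: "cmod (q z) \<le> M"
      proof -
        have "cmod (q z) \<le> cmod (b z) + cmod (b z - q z)" using norm_triangle_ineq4[of "b z" "b z - q z"] by simp
        then show ?thesis using B q(2) z e' M by force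
      qed
      have "a z * b z - p z * q z = a z * (b z - q z) + (a z - p z) * q z" by (simp add: algebra_simps)
      then have "cmod (a z * b z - p z * q z) \<le> cmod (a z) * cmod (b z - q z) + cmod (a z - p z) * cmod (q z)"
        using norm_triangle_ineq[of "a z * (b z - q z)" "(a z - p z) * q z"] by (simp add: norm_mult)
      also have "\<dots> \<le> M * e' + e' * M"
      proof (intro add_mono mult_mono)
        show "cmod (a z) \<le> M" using A z M(2) by force
        show "cmod (b z - q z) \<le> e'" using q(2) z by (simp add: less_imp_le)
        show "cmod (a z - p z) \<le> e'" using p(2) z by (simp add: less_imp_le)
        show "cmod (q z) \<le> M" by (rule qb)
      qed (use e' M in auto)
      also have "\<dots> < e" using e' e by (simp add: mult.commute)
      finally show "cmod (a z * b z - p z * q z) < e" .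
    qed
    note est = this
    show "\<exists>p\<in>poly_in2 f1 f2. \<forall>z\<in>D. cmod (a z * b z - p z) < e"
      apply (rule bexI[where x="\<lambda>z. p z * q z"])
      using est poly_in2_mult[OF p(1) q(1)] by auto
  qed
qed

lemma approx_const: "(\<lambda>z. c) \<in> approx f1 f2 D"
  by (rule approx_poly[OF poly_in2_const])

lemma approx_power:
  assumes "a \<in> approx f1 f2 D" "continuous_on D f1" "continuous_on D f2" "compact D"
  shows "(\<lambda>z. a z ^ n) \<in> approx f1 f2 D"
proof (induction n)
  case 0 then show ?case using approx_const[of 1] by simp
next
  case (Suc n) then show ?case using approx_mult[OF assms(1) Suc assms(2-4)] by simp
qed

lemma approx_sum:
  assumes "finite S" "\<And>x. x \<in> S \<Longrightarrow> h x \<in> approx f1 f2 D"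
  shows "(\<lambda>z. \<Sum>x\<in>S. h x z) \<in> approx f1 f2 D"
  using assms
proof (induction S rule: finite_induct)
  case empty then show ?case using approx_const[of 0] by simp
next
  case (insert x F) then show ?case using approx_add[of "h x" f1 f2 D "\<lambda>z. \<Sum>x\<in>F. h x z"] by simp
qed

lemma approx_mono:
  assumes "g2 \<in> approx f1 f2 D" "continuous_on D f1" "continuous_on D f2" "compact D"
  shows "approx f1 g2 D \<subseteq> approx f1 f2 D"
proof
  fix h assume h: "h \<in> approx f1 g2 D"
  have polys: "p \<in> approx f1 f2 D" if pp: "p \<in> poly_in2 f1 g2" for p
  proof -
    obtain S c where S: "finite S" "p = (\<lambda>z. \<Sum>x\<in>S. c x * f1 z ^ fst x * g2 z ^ snd x)"
      using poly_in2_E[OF pp] by blast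
    have f1a: "f1 \<in> approx f1 f2 D" by (rule approx_poly[OF poly_in2_f1])
    show ?thesis unfolding S(2)
    proof (rule approx_sum[OF S(1)])
      fix x assume "x \<in> S"
      show "(\<lambda>z. c x * f1 z ^ fst x * g2 z ^ snd x) \<in> approx f1 f2 D"
        using approx_mult[OF approx_mult[OF approx_const approx_power[OF f1a assms(2-4)] assms(2-4)]
            approx_power[OF assms(1-4)] assms(2-4)] by simp
    qed
  qed
  show "h \<in> approx f1 f2 D"
  proof (rule approx_closed)
    fix e :: real assume "e > 0"
    then obtain p where "p \<in> poly_in2 f1 g2" "\<forall>z\<in>D. cmod (h z - p z) < e"
      using h unfolding approx_def by blast
    then show "\<exists>h'\<in>approx f1 f2 D. \<forall>z\<in>D. cmod (h z - h' z) < e" using polys by blast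
  qed
qed

lemma unif_closure_alg_approx:
  "unif_closure_alg f1 f2 D = {h \<in> extensional D. continuous_on D h \<and> h \<in> approx f1 f2 D}"
  unfolding unif_closure_alg_def approx_def by blast




lemma taylor_approx:
  fixes F :: "complex \<Rightarrow> complex"
  assumes hol: "F holomorphic_on ball c R2" and R: "0 \<le> R1" "R1 < R2" and e: "e > 0"
  shows "\<exists>a n. \<forall>w\<in>cball c R1. cmod (F w - (\<Sum>i<n. a i * (w - c) ^ i)) < e"
proof -
  define a where "a i = (deriv ^^ i) F c / fact i" for i
  define R' where "R' = (R1 + R2) / 2"
  have R': "R1 < R'" "R' < R2" using R by (auto simp: R'_def)
  have "(\<lambda>i. a i * ((c + of_real R') - c) ^ i) sums F (c + of_real R')"
    unfolding a_def by (rule holomorphic_power_series[OF hol]) (use R' R in \<open>auto simp: dist_norm\<close>)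
  then have "summable (\<lambda>i. a i * (of_real R') ^ i)" by (simp add: sums_iff)
  then have "conv_radius a \<ge> norm (of_real R' :: complex)" by (rule conv_radius_geI)
  moreover have "\<bar>R'\<bar> = R'" using R' R by simp
  moreover have "ereal R1 < ereal R'" using R' by simp
  ultimately have cr: "R1 < conv_radius a" by (metis norm_of_real order_less_le_trans)
  have ul: "uniform_limit (cball c R1) (\<lambda>n x. \<Sum>i<n. a i * (x - c) ^ i) (\<lambda>x. suminf (\<lambda>i. a i * (x - c) ^ i)) sequentially"
    by (rule powser_uniform_limit[OF cr])
  have eq: "suminf (\<lambda>i. a i * (x - c) ^ i) = F x" if "x \<in> cball c R1" for x
  proof -
    have "(\<lambda>i. a i * (x - c) ^ i) sums F x"
      unfolding a_def by (rule holomorphic_power_series[OF hol]) (use that R in \<open>auto simp: dist_norm\<close>)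
    then show ?thesis by (simp add: sums_iff)
  qed
  from uniform_limitD[OF ul e] obtain n where
    "\<forall>x\<in>cball c R1. dist (\<Sum>i<n. a i * (x - c) ^ i) (suminf (\<lambda>i. a i * (x - c) ^ i)) < e"
    by (auto simp: eventually_sequentially)
  then have "\<forall>w\<in>cball c R1. cmod (F w - (\<Sum>i<n. a i * (w - c) ^ i)) < e"
    using eq by (auto simp: dist_norm norm_minus_commute)
  then show ?thesis by blast
qed

lemma csqrt_shift:
  assumes w: "Re w \<ge> 0" and d: "d > 0"
  shows "cmod (csqrt (w + of_real d) - csqrt w) \<le> sqrt d"
proof -
  define a where "a = csqrt (w + of_real d)"
  define b where "b = csqrt w"
  have a2: "a^2 = w + of_real d" by (simp add: a_def)
  have b2: "b^2 = w" by (simp add: b_def)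
  have Rb: "Re b \<ge> 0" unfolding b_def by (rule Re_csqrt)
  have Ra0: "Re a \<ge> 0" unfolding a_def by (rule Re_csqrt)
  have "Re (a^2) = Re a ^2 - Im a ^2" by (simp add: power2_eq_square)
  moreover have "Re (a^2) = Re w + d" using a2 by simp
  ultimately have "Re a ^ 2 = Re w + d + Im a ^ 2" by simp
  then have ra2: "Re a ^ 2 \<ge> d" using w by (smt (verit) zero_le_power2)
  have Ra: "Re a \<ge> sqrt d" using real_sqrt_le_mono[OF ra2] Ra0 by simp
  have "cmod (a + b) \<ge> Re (a + b)" by (rule complex_Re_le_cmod)
  then have ab: "cmod (a + b) \<ge> sqrt d" using Ra Rb by simp
  have sd: "sqrt d > 0" using d by simp
  have "(a - b) * (a + b) = of_real d" using a2 b2 by (simp add: algebra_simps power2_eq_square)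
  then have "cmod (a - b) * cmod (a + b) = d" using d by (metis norm_mult norm_of_real abs_of_pos)
  then have "cmod (a - b) * sqrt d \<le> d"
    by (metis ab mult_left_mono norm_ge_zero)
  then have "cmod (a - b) \<le> d / sqrt d" using sd by (simp add: field_simps)
  also have "d / sqrt d = sqrt d" using d by (metis real_div_sqrt less_imp_le)
  finally show ?thesis by (simp add: a_def b_def)
qed

lemma shifted_sqrt_approx:
  assumes d: "d > 0" and R: "R \<ge> 0" and e: "e > 0"
  shows "\<exists>a n c. \<forall>w. Re w \<ge> 0 \<and> cmod w \<le> R \<longrightarrow>
            cmod (csqrt (w + of_real d) - (\<Sum>i<n. a i * (w - c) ^ i)) < e"
proof -
  define c where "c = 2 * R^2 / d + 1"
  have "R^2 \<ge> 0" by simp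
  then have c: "c > 0" "c * d / 2 \<ge> R^2" using d R by (auto simp: c_def field_simps add_pos_nonneg)
  have hol: "(\<lambda>w. csqrt (w + of_real d)) holomorphic_on ball (of_real c) (c + d/2)"
  proof -
    have csd: "csqrt field_differentiable at (w + of_real d)" if "w \<in> ball (of_real c) (c + d/2)" for w
    proof (rule field_differentiable_at_csqrt, rule notI)
      assume "w + of_real d \<in> \<real>\<^sub>\<le>\<^sub>0"
      then obtain t where t: "t \<le> 0" "w + of_real d = of_real t" by (auto simp: nonpos_Reals_def)
      then have "w = of_real (t - d)" by (simp add: algebra_simps)
      then have "of_real c - w = of_real (c - t + d)" by simp
      then have "dist (of_real c) w = c - t + d" using t c d by (simp add: dist_norm del: of_real_diff of_real_add)
      then show False using that t d by simp
    qed
    then show ?thesis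
    proof -
      have "(\<lambda>w. csqrt (w + of_real d)) field_differentiable at w" if "w \<in> ball (of_real c) (c + d/2)" for w
      proof -
        have "(\<lambda>w. w + of_real d) field_differentiable at w"
          by (intro derivative_intros)
        from field_differentiable_compose[OF this csd[OF that]]
        show ?thesis by (simp add: o_def)
      qed
      then show ?thesis unfolding holomorphic_on_def using field_differentiable_at_within by blast
    qed
  qed
  obtain a n where an: "\<forall>w\<in>cball (of_real c) (c + d/4). cmod (csqrt (w + of_real d) - (\<Sum>i<n. a i * (w - of_real c) ^ i)) < e"
    using taylor_approx[OF hol _ _ e, of "c + d/4"] c d by auto
  have "cmod w \<le> R \<and> Re w \<ge> 0 \<longrightarrow> w \<in> cball (of_real c) (c + d/4)" for w
  proof
    assume h: "cmod w \<le> R \<and> Re w \<ge> 0"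
    have "(dist (of_real c) w)^2 = (Re w - c)^2 + (Im w)^2"
      by (simp add: dist_norm cmod_def norm_minus_commute power2_commute)
    also have "\<dots> = (cmod w)^2 - 2 * c * Re w + c^2"
      by (simp add: cmod_power2 power2_diff algebra_simps)
    also have "\<dots> \<le> R^2 + c^2" using h c by (smt (verit) mult_nonneg_nonneg norm_ge_zero power_mono)
    also have "\<dots> \<le> (c + d/4)^2"
    proof -
      have "(c + d/4)^2 = c^2 + c*d/2 + (d/4)^2" by (simp add: power2_sum)
      moreover have "(d/4)^2 \<ge> 0" by simp
      ultimately show ?thesis using c by linarith
    qed
    finally have dd: "(dist (of_real c) w)^2 \<le> (c + d/4)^2" .
    have "c + d/4 \<ge> 0" using c d by simp
    with dd have "dist (of_real c) w \<le> c + d/4" by (rule power2_le_imp_le)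
    then show "w \<in> cball (of_real c) (c + d/4)" by simp
  qed
  then show ?thesis using an by blast
qed




lemma poly_in2_power:
  assumes "p \<in> poly_in2 f1 f2" shows "(\<lambda>z. p z ^ n) \<in> poly_in2 f1 f2"
proof (induction n)
  case 0 then show ?case using poly_in2_const[of 1] by simp
next
  case (Suc n) then show ?case using poly_in2_mult[OF assms Suc] by simp
qed

lemma poly_in2_sum:
  assumes "finite S" "\<And>x. x \<in> S \<Longrightarrow> h x \<in> poly_in2 f1 f2"
  shows "(\<lambda>z. \<Sum>x\<in>S. h x z) \<in> poly_in2 f1 f2"
  using assms
proof (induction S rule: finite_induct)
  case empty then show ?case using poly_in2_const[of 0] by simp
next
  case (insert x F) then show ?case using poly_in2_add[of "h x" f1 f2 "\<lambda>z. \<Sum>x\<in>F. h x z"] by simp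
qed

lemma sqrt_in_approx:
  assumes sec: "\<forall>z\<in>D. \<bar>Im (K z)\<bar> \<le> Re (K z)" and sq: "\<forall>z\<in>D. (K z)^2 = f1 z * f2 z"
    and bd: "\<forall>z\<in>D. cmod (K z) \<le> B"
  shows "K \<in> approx f1 f2 D"
  unfolding approx_def
proof (intro CollectI allI impI)
  fix e :: real assume e: "e > 0"
  define d where "d = (e/2)^2"
  have d: "d > 0" "sqrt d = e/2" using e by (auto simp: d_def)
  have R: "B^2 \<ge> 0" by simp
  obtain a n c where anc: "\<forall>w. Re w \<ge> 0 \<and> cmod w \<le> B^2 \<longrightarrow>
            cmod (csqrt (w + of_real d) - (\<Sum>i<n. a i * (w - c) ^ i)) < e/2"
    using shifted_sqrt_approx[OF d(1) R, of "e/2"] e by auto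
  define p where "p = (\<lambda>z. \<Sum>i<n. a i * (f1 z * f2 z - c) ^ i)"
  have pp: "p \<in> poly_in2 f1 f2"
    unfolding p_def
  proof (rule poly_in2_sum[OF finite_lessThan])
    fix i
    have "(\<lambda>z. f1 z * f2 z + (- c)) \<in> poly_in2 f1 f2"
      by (rule poly_in2_add[OF poly_in2_mult[OF poly_in2_f1 poly_in2_f2] poly_in2_const])
    then have "(\<lambda>z. f1 z * f2 z - c) \<in> poly_in2 f1 f2" by simp
    from poly_in2_mult[OF poly_in2_const poly_in2_power[OF this]]
    show "(\<lambda>z. a i * (f1 z * f2 z - c) ^ i) \<in> poly_in2 f1 f2" .
  qed
  have "\<forall>z\<in>D. cmod (K z - p z) < e"
  proof
    fix z assume z: "z \<in> D"
    define w where "w = (K z)^2"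
    have "\<bar>Im (K z)\<bar> ^2 \<le> Re (K z) ^2"
      by (rule power_mono) (use sec z in auto)
    then have "Im (K z) ^2 \<le> Re (K z) ^2" by simp
    then have Rw: "Re w \<ge> 0" by (simp add: w_def power2_eq_square)
    have "cmod w = cmod (K z) ^ 2" by (simp add: w_def norm_power)
    also have "\<dots> \<le> B^2" using bd z by (simp add: power_mono)
    finally have Nw: "cmod w \<le> B^2" .
    have cs: "csqrt w = K z"
    proof (rule csqrt_unique)
      show "(K z)^2 = w" by (simp add: w_def)
      show "0 < Re (K z) \<or> Re (K z) = 0 \<and> 0 \<le> Im (K z)" 
      proof -
        have "\<bar>Im (K z)\<bar> \<le> Re (K z)" using sec z by auto
        then show ?thesis by linarith
      qed
    qed
    have pz: "p z = (\<Sum>i<n. a i * (w - c) ^ i)" using sq z by (simp add: p_def w_def)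
    have "cmod (K z - p z) \<le> cmod (csqrt w - csqrt (w + of_real d)) + cmod (csqrt (w + of_real d) - p z)"
      using norm_triangle_ineq[of "csqrt w - csqrt (w + of_real d)" "csqrt (w + of_real d) - p z"] cs by simp
    also have "\<dots> < e/2 + e/2"
    proof (rule add_le_less_mono)
      show "cmod (csqrt w - csqrt (w + of_real d)) \<le> e/2"
        using csqrt_shift[OF Rw d(1)] d(2) by (simp add: norm_minus_commute)
      show "cmod (csqrt (w + of_real d) - p z) < e/2" using anc Rw Nw pz by simp
    qed
    finally show "cmod (K z - p z) < e" by simp
  qed
  then show "\<exists>p\<in>poly_in2 f1 f2. \<forall>z\<in>D. cmod (K z - p z) < e" using pp by blast
qed

lemma odd_part:
  fixes z :: complex
  shows "(\<Sum>i<n. a i * z ^ i) - (\<Sum>i<n. a i * (-z) ^ i)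
       = 2 * z * (\<Sum>i<n. (if odd i then a i else 0) * (z^2) ^ (i div 2))"
proof -
  have "(\<Sum>i<n. a i * z ^ i) - (\<Sum>i<n. a i * (-z) ^ i) = (\<Sum>i<n. a i * z ^ i - a i * (-z) ^ i)"
    by (simp add: sum_subtractf)
  also have "\<dots> = (\<Sum>i<n. 2 * z * ((if odd i then a i else 0) * (z^2) ^ (i div 2)))"
  proof (rule sum.cong[OF refl])
    fix i assume "i \<in> {..<n}"
    show "a i * z ^ i - a i * (-z) ^ i = 2 * z * ((if odd i then a i else 0) * (z^2) ^ (i div 2))"
    proof (cases "odd i")
      case True
      then obtain k where k: "i = Suc (2*k)" by (metis oddE Suc_eq_plus1)
      have dk: "i div 2 = k" using k by simp
      have z1: "z ^ i = z * (z^2) ^ k" using k by (simp add: power_mult)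
      have z2: "(-z) ^ i = - (z * (z^2) ^ k)" using k by (simp add: power_mult)
      show ?thesis using True by (simp only: z1 z2 dk if_True) (simp add: algebra_simps)
    next
      case False
      then have "(-z) ^ i = z ^ i" by (simp add: power_minus_even)
      then show ?thesis using False by simp
    qed
  qed
  also have "\<dots> = 2 * z * (\<Sum>i<n. (if odd i then a i else 0) * (z^2) ^ (i div 2))"
    by (simp add: sum_distrib_left)
  finally show ?thesis .
qed




lemma cont_bounded:
  assumes "continuous_on D h" "compact D"
  shows "\<exists>B. \<forall>z\<in>D. cmod (h z) \<le> B"
proof -
  have "compact (h ` D)" by (rule compact_continuous_image[OF assms])
  then obtain B where "\<forall>x\<in>h ` D. norm x \<le> B"
    using compact_imp_bounded bounded_iff by metis
  then show ?thesis by auto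
qed

lemma perturb:
  fixes G \<phi> :: "complex \<Rightarrow> complex"
  assumes r: "0 \<le> r" "r < \<rho>" and Gc: "continuous_on (cball 0 r) G"
    and hol: "\<phi> holomorphic_on ball 0 \<rho>" and odd: "\<forall>z\<in>ball 0 \<rho>. \<phi> (-z) = - \<phi> z"
    and sec: "\<forall>z\<in>cball 0 r. \<bar>Im (z * G z)\<bar> \<le> Re (z * G z)"
  shows "(\<lambda>z. (G z + \<phi> z)^2) \<in> approx (\<lambda>z. z^2) (\<lambda>z. G z ^2) (cball 0 r)"
proof -
  let ?D = "cball (0::complex) r"
  let ?f1 = "\<lambda>z::complex. z^2"
  let ?f2 = "\<lambda>z. G z ^2"
  have c1: "continuous_on ?D ?f1" by (intro continuous_intros)
  have c2: "continuous_on ?D ?f2" using Gc by (intro continuous_intros)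
  have cD: "compact ?D" by simp
  note cc = c1 c2 cD
  have sub: "?D \<subseteq> ball 0 \<rho>" using r by auto
  have phic: "continuous_on ?D \<phi>"
    using holomorphic_on_imp_continuous_on[OF hol] sub continuous_on_subset by blast
  have Kc: "continuous_on ?D (\<lambda>z. z * G z)" using Gc by (intro continuous_intros)
  obtain BK where BK: "\<forall>z\<in>?D. cmod (z * G z) \<le> BK" using cont_bounded[OF Kc cD] by blast
  obtain BG where BG: "\<forall>z\<in>?D. cmod (G z) \<le> BG" using cont_bounded[OF Gc cD] by blast
  obtain Bp where Bp: "\<forall>z\<in>?D. cmod (\<phi> z) \<le> Bp" using cont_bounded[OF phic cD] by blast
  have Kin: "(\<lambda>z. z * G z) \<in> approx ?f1 ?f2 ?D"
    by (rule sqrt_in_approx[OF sec _ BK]) (simp add: power_mult_distrib)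
  show ?thesis
  proof (rule approx_closed)
    fix e :: real assume e: "e > 0"
    define M where "M = 2 * \<bar>BG\<bar> + 2 * \<bar>Bp\<bar> + 2"
    have M: "M > 0" by (simp add: M_def add_nonneg_pos)
    define e' where "e' = min 1 (e / M)"
    have e': "e' > 0" "e' \<le> 1" "e' * M \<le> e" using e M
      by (auto simp: e'_def min_def field_simps)
    obtain a n where an: "\<forall>w\<in>?D. cmod (\<phi> w - (\<Sum>i<n. a i * (w - 0) ^ i)) < e'"
      using taylor_approx[OF hol r e'(1)] by blast
    define E where "E = (\<lambda>z::complex. \<Sum>i<n. (if odd i then a i else 0) * (z^2) ^ (i div 2))"
    have Ep: "E \<in> poly_in2 ?f1 ?f2"
    proof -
      have "(\<lambda>z. \<Sum>i\<in>{..<n}. (if odd i then a i else 0) * ?f1 z ^ (i div 2) * ?f2 z ^ (0::nat)) \<in> poly_in2 ?f1 ?f2"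
        by (rule poly_in2_gen) simp
      then show ?thesis by (simp add: E_def)
    qed
    have Ea: "E \<in> approx ?f1 ?f2 ?D" by (rule approx_poly[OF Ep])
    have f1a: "?f1 \<in> approx ?f1 ?f2 ?D" by (rule approx_poly[OF poly_in2_f1])
    have f2a: "?f2 \<in> approx ?f1 ?f2 ?D" by (rule approx_poly[OF poly_in2_f2])
    define h' where "h' = (\<lambda>z. ?f2 z + (\<lambda>z. (\<lambda>z. 2 * (z * G z)) z * E z) z + (\<lambda>z. ?f1 z * (\<lambda>z. E z * E z) z) z)"
    have h'a: "h' \<in> approx ?f1 ?f2 ?D"
      unfolding h'_def
      by (intro approx_add f2a approx_mult[OF _ _ cc] approx_const Kin Ea f1a)
    have h'eq: "h' z = (G z + z * E z)^2" for z
      by (simp add: h'_def power2_eq_square algebra_simps)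
    have "\<forall>z\<in>?D. cmod ((G z + \<phi> z)^2 - h' z) < e"
    proof
      fix z assume z: "z \<in> ?D"
      have mz: "-z \<in> ?D" using z by simp
      have zb: "z \<in> ball 0 \<rho>" using z sub by auto
      have odd_eq: "(\<Sum>i<n. a i * z ^ i) - (\<Sum>i<n. a i * (-z) ^ i) = 2 * z * E z"
        unfolding E_def by (rule odd_part)
      define X where "X = (\<phi> z - (\<Sum>i<n. a i * z ^ i)) - (\<phi> (-z) - (\<Sum>i<n. a i * (-z) ^ i))"
      have "\<phi> z - z * E z = X / 2"
        using odd_eq odd zb unfolding X_def by (simp add: field_simps)
      then have "cmod (\<phi> z - z * E z) = cmod (X / 2)" by (rule arg_cong)
      also have "\<dots> = cmod X / 2" by (simp add: norm_divide)
      also have "\<dots> \<le> (cmod (\<phi> z - (\<Sum>i<n. a i * z ^ i)) + cmod (\<phi> (-z) - (\<Sum>i<n. a i * (-z) ^ i))) / 2"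
        using norm_triangle_ineq4[of "\<phi> z - (\<Sum>i<n. a i * z ^ i)" "\<phi> (-z) - (\<Sum>i<n. a i * (-z) ^ i)"]
        unfolding X_def by simp
      also have "\<dots> < e'"
      proof -
        have "cmod (\<phi> z - (\<Sum>i<n. a i * z ^ i)) < e'" using an z by simp
        moreover have "cmod (\<phi> (-z) - (\<Sum>i<n. a i * (-z) ^ i)) < e'" using an mz by (metis diff_zero)
        ultimately show ?thesis by simp
      qed
      finally have err: "cmod (\<phi> z - z * E z) < e'" .
      have "cmod (z * E z) \<le> cmod (\<phi> z) + cmod (\<phi> z - z * E z)"
        using norm_triangle_ineq4[of "\<phi> z" "\<phi> z - z * E z"] by simp
      moreover have "cmod (\<phi> z) \<le> \<bar>Bp\<bar>" using Bp z by force
      ultimately have bzE: "cmod (z * E z) \<le> \<bar>Bp\<bar> + 1" using err e' by linarith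
      have "cmod (2 * G z + \<phi> z + z * E z) \<le> 2 * cmod (G z) + cmod (\<phi> z) + cmod (z * E z)"
      proof -
        have "cmod (2 * G z + \<phi> z + z * E z) \<le> cmod (2 * G z + \<phi> z) + cmod (z * E z)"
          by (rule norm_triangle_ineq)
        also have "cmod (2 * G z + \<phi> z) \<le> cmod (2 * G z) + cmod (\<phi> z)" by (rule norm_triangle_ineq)
        also have "cmod (2 * G z) = 2 * cmod (G z)" by (simp add: norm_mult)
        finally show ?thesis by simp
      qed
      also have "\<dots> \<le> M"
      proof -
        have "cmod (G z) \<le> \<bar>BG\<bar>" using BG z by force
        moreover have "cmod (\<phi> z) \<le> \<bar>Bp\<bar>" using Bp z by force
        ultimately show ?thesis using bzE unfolding M_def by linarith
      qed
      finally have b2: "cmod (2 * G z + \<phi> z + z * E z) \<le> M" .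
      have "(G z + \<phi> z)^2 - h' z = (\<phi> z - z * E z) * (2 * G z + \<phi> z + z * E z)"
        by (simp add: h'eq power2_eq_square algebra_simps)
      then have "cmod ((G z + \<phi> z)^2 - h' z) = cmod (\<phi> z - z * E z) * cmod (2 * G z + \<phi> z + z * E z)"
        by (simp add: norm_mult)
      also have "\<dots> \<le> cmod (\<phi> z - z * E z) * M" by (rule mult_left_mono[OF b2 norm_ge_zero])
      also have "\<dots> < e' * M" using err M by simp
      also have "\<dots> \<le> e" by (rule e'(3))
      finally show "cmod ((G z + \<phi> z)^2 - h' z) < e" .
    qed
    then show "\<exists>h'\<in>approx ?f1 ?f2 ?D. \<forall>z\<in>?D. cmod ((G z + \<phi> z)^2 - h' z) < e"
      using h'a by blast
  qed
qed




lemma sec_lemma: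
  fixes z G :: complex
  assumes "cmod (G - cnj z) \<le> cmod z / 4"
  shows "\<bar>Im (z * G)\<bar> \<le> Re (z * G)"
proof -
  define E where "E = z * (G - cnj z)"
  have zG: "z * G = of_real (cmod z ^ 2) + E"
    unfolding E_def by (simp add: complex_norm_square[symmetric] algebra_simps)
  have "cmod E = cmod z * cmod (G - cnj z)" by (simp add: E_def norm_mult)
  also have "\<dots> \<le> cmod z * (cmod z / 4)" by (rule mult_left_mono[OF assms norm_ge_zero])
  finally have Eb: "cmod E \<le> cmod z ^ 2 / 4" by (simp add: power2_eq_square)
  have "Re (z * G) = cmod z ^ 2 + Re E" using zG by simp
  moreover have "Im (z * G) = Im E" using zG by simp
  moreover have "\<bar>Re E\<bar> \<le> cmod E" by (rule abs_Re_le_cmod)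
  moreover have "\<bar>Im E\<bar> \<le> cmod E" by (rule abs_Im_le_cmod)
  moreover have "cmod z ^ 2 \<ge> 0" by simp
  ultimately show ?thesis using Eb by linarith
qed

lemma Dg_cnj:
  assumes bl: "bounded_linear L" and gz: "wirt_z L = 0" and gzbar: "wirt_zbar L = 1"
  shows "L z = cnj z"
proof -
  have a: "L 1 - \<i> * L \<i> = 0" using gz by (simp add: wirt_z_def)
  have b: "L 1 + \<i> * L \<i> = 2" using gzbar by (simp add: wirt_zbar_def)
  have L1: "L 1 = 1" using a b by (simp add: algebra_simps)
  have Li: "L \<i> = - \<i>"
  proof -
    have "\<i> * L \<i> = 1" using a L1 by simp
    then have "\<i> * (\<i> * L \<i>) = \<i>" by simp
    then have "- L \<i> = \<i>" by (simp add: mult.assoc[symmetric])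
    then show ?thesis by (metis minus_minus)
  qed
  have z: "z = Re z *\<^sub>R 1 + Im z *\<^sub>R \<i>" by (simp add: complex_eq_iff)
  have "L z = Re z *\<^sub>R L 1 + Im z *\<^sub>R L \<i>"
    by (subst z) (simp add: linear_add[OF bounded_linear.linear[OF bl]] linear_scale[OF bounded_linear.linear[OF bl]])
  also have "\<dots> = cnj z" by (simp add: L1 Li complex_eq_iff)
  finally show ?thesis .
qed




theorem mainTheorem9:
  fixes g f :: "complex \<Rightarrow> complex"
    and Dg :: "complex \<Rightarrow> complex \<Rightarrow> complex"
    and U :: "complex set"
  assumes U: "open U" "0 \<in> U"
    and g_deriv: "\<forall>z\<in>U. (g has_derivative Dg z) (at z)"
    and g_C1: "continuous_on U (\<lambda>z. Dg z 1)" "continuous_on U (\<lambda>z. Dg z \<i>)"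
    and g0: "g 0 = 0"
    and gz: "wirt_z (Dg 0) = 0"
    and gzbar: "wirt_zbar (Dg 0) = 1"
    and sep: "\<exists>\<epsilon>>0. \<forall>z\<in>ball 0 \<epsilon>. \<forall>w\<in>ball 0 \<epsilon>.
               z ^ 2 = w ^ 2 \<and> (g z) ^ 2 = (g w) ^ 2 \<longrightarrow> z = w"
    and f_hol: "\<exists>\<rho>>0. f holomorphic_on ball 0 \<rho> \<and> (\<forall>z\<in>ball 0 \<rho>. f (- z) = - f z)"
    and f_O: "\<exists>C \<rho>. \<rho> > 0 \<and> (\<forall>z\<in>ball 0 \<rho>. cmod (f z) \<le> C * cmod z ^ 3)"
  shows "\<exists>r0>0. \<forall>r. 0 < r \<and> r < r0 \<longrightarrow>
           unif_closure_alg (\<lambda>z. z ^ 2) (\<lambda>z. (g z + f z) ^ 2) (cball 0 r)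
         = unif_closure_alg (\<lambda>z. z ^ 2) (\<lambda>z. (g z) ^ 2) (cball 0 r)"
proof -
  have hd0: "(g has_derivative Dg 0) (at 0)" using g_deriv U by blast
  have bl: "bounded_linear (Dg 0)" using hd0 by (rule has_derivative_bounded_linear)
  have Dc: "Dg 0 z = cnj z" for z by (rule Dg_cnj[OF bl gz gzbar])
  obtain dg where dg: "dg > 0" "\<forall>y. cmod (y - 0) < dg \<longrightarrow> cmod (g y - g 0 - Dg 0 (y - 0)) \<le> 1/8 * cmod (y - 0)"
  proof -
    have "\<forall>e>0. \<exists>d>0. \<forall>y. cmod (y - 0) < d \<longrightarrow> cmod (g y - g 0 - Dg 0 (y - 0)) \<le> e * cmod (y - 0)"
      using hd0 unfolding has_derivative_at_alt by blast
    then have "\<exists>d>0. \<forall>y. cmod (y - 0) < d \<longrightarrow> cmod (g y - g 0 - Dg 0 (y - 0)) \<le> 1/8 * cmod (y - 0)"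
      by (rule allE[where x="1/8"]) simp
    then show ?thesis using that by blast
  qed
  have gb: "cmod (g y - cnj y) \<le> cmod y / 8" if "cmod y < dg" for y
    using dg(2) that by (simp add: g0 Dc)
  obtain C rO where rO: "rO > 0" "\<forall>z\<in>ball 0 rO. cmod (f z) \<le> C * cmod z ^ 3" using f_O by blast
  define t where "t = 1 / (8 * (\<bar>C\<bar> + 1))"
  have t: "t > 0" "t \<le> 1" "\<bar>C\<bar> * t \<le> 1/8" by (auto simp: t_def field_simps)
  have fb: "cmod (f y) \<le> cmod y / 8" if "cmod y < rO" "cmod y < t" for y
  proof -
    have "cmod (f y) \<le> C * cmod y ^ 3" using rO that by simp
    also have "\<dots> \<le> \<bar>C\<bar> * cmod y ^ 3" by (simp add: mult_right_mono)
    also have "\<dots> = (\<bar>C\<bar> * cmod y ^ 2) * cmod y" by (simp add: power3_eq_cube power2_eq_square)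
    also have "\<dots> \<le> (1/8) * cmod y"
    proof (rule mult_right_mono[OF _ norm_ge_zero])
      have "cmod y * cmod y \<le> cmod y * 1" using that t by (intro mult_left_mono) auto
      then have "cmod y ^ 2 \<le> t" using that t by (simp add: power2_eq_square)
      then have "\<bar>C\<bar> * cmod y ^ 2 \<le> \<bar>C\<bar> * t" by (simp add: mult_left_mono)
      then show "\<bar>C\<bar> * cmod y ^ 2 \<le> 1/8" using t by linarith
    qed
    finally show ?thesis by simp
  qed
  obtain eU where eU: "eU > 0" "ball 0 eU \<subseteq> U" using U open_contains_ball by blast
  obtain rh where rh: "rh > 0" "f holomorphic_on ball 0 rh" "\<forall>z\<in>ball 0 rh. f (- z) = - f z"
    using f_hol by blast
  define r0 where "r0 = min (min dg rO) (min t (min eU rh))"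
  have r0: "r0 > 0" using dg rO t eU rh by (simp add: r0_def)
  have gcU: "continuous_on U g"
  proof (rule continuous_at_imp_continuous_on, rule ballI)
    fix z assume "z \<in> U"
    then have "(g has_derivative Dg z) (at z)" using g_deriv by blast
    then show "isCont g z" by (rule has_derivative_continuous)
  qed
  have fcb: "continuous_on (ball 0 rh) f" using rh(2) by (rule holomorphic_on_imp_continuous_on)
  have main: "unif_closure_alg (\<lambda>z. z ^ 2) (\<lambda>z. (g z + f z) ^ 2) (cball 0 r)
         = unif_closure_alg (\<lambda>z. z ^ 2) (\<lambda>z. (g z) ^ 2) (cball 0 r)" if r: "0 < r" "r < r0" for r
  proof -
    let ?D = "cball (0::complex) r"
    have Dsub: "?D \<subseteq> ball 0 r0" using r by auto
    have small: "cmod z < dg" "cmod z < rO" "cmod z < t" "cmod z < eU" "cmod z < rh" if "z \<in> ?D" for z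
      using that r unfolding r0_def by auto
    have gc: "continuous_on ?D g"
      by (rule continuous_on_subset[OF gcU]) (use eU small in \<open>auto simp: subset_iff\<close>)
    have fc: "continuous_on ?D f"
      by (rule continuous_on_subset[OF fcb]) (use small in auto)
    have gfc: "continuous_on ?D (\<lambda>z. g z + f z)" using gc fc by (intro continuous_intros)
    have rrh: "r < rh" using r unfolding r0_def by auto
    have sec1: "\<forall>z\<in>?D. \<bar>Im (z * g z)\<bar> \<le> Re (z * g z)"
    proof
      fix z assume z: "z \<in> ?D"
      show "\<bar>Im (z * g z)\<bar> \<le> Re (z * g z)"
        by (rule sec_lemma) (use gb[OF small(1)[OF z]] norm_ge_zero[of z] in linarith)
    qed
    have sec2: "\<forall>z\<in>?D. \<bar>Im (z * (g z + f z))\<bar> \<le> Re (z * (g z + f z))"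
    proof
      fix z assume z: "z \<in> ?D"
      have "cmod (g z + f z - cnj z) \<le> cmod (g z - cnj z) + cmod (f z)"
        using norm_triangle_ineq[of "g z - cnj z" "f z"] by (simp add: algebra_simps)
      then show "\<bar>Im (z * (g z + f z))\<bar> \<le> Re (z * (g z + f z))"
        by (intro sec_lemma) (use gb[OF small(1)[OF z]] fb[OF small(2,3)[OF z]] norm_ge_zero[of z] in linarith)
    qed
    have A1: "(\<lambda>z. (g z + f z)^2) \<in> approx (\<lambda>z. z^2) (\<lambda>z. g z ^2) ?D"
      by (rule perturb[OF _ rrh gc rh(2) rh(3) sec1]) (use r in simp)
    have hm: "(\<lambda>z. - f z) holomorphic_on ball 0 rh" using rh(2) by (intro holomorphic_intros)
    have om: "\<forall>z\<in>ball 0 rh. - f (- z) = - (- f z)" using rh(3) by simp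
    have A2': "(\<lambda>z. ((g z + f z) + - f z)^2) \<in> approx (\<lambda>z. z^2) (\<lambda>z. (g z + f z) ^2) ?D"
      by (rule perturb[OF _ rrh gfc hm om sec2]) (use r in simp)
    have A2: "(\<lambda>z. g z ^2) \<in> approx (\<lambda>z. z^2) (\<lambda>z. (g z + f z) ^2) ?D" using A2' by simp
    have q: "continuous_on ?D (\<lambda>z::complex. z^2)" by (intro continuous_intros)
    have c1: "continuous_on ?D (\<lambda>z. g z ^2)" using gc by (intro continuous_intros)
    have c2: "continuous_on ?D (\<lambda>z. (g z + f z) ^2)" by (rule continuous_on_power[OF gfc])
    have "approx (\<lambda>z. z^2) (\<lambda>z. (g z + f z) ^2) ?D = approx (\<lambda>z. z^2) (\<lambda>z. g z ^2) ?D"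
      using approx_mono[OF A1 q c1] approx_mono[OF A2 q c2] by auto
    then show ?thesis unfolding unif_closure_alg_approx by simp
  qed
  show ?thesis using r0 main by blast
qed


end
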